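(* Let $r\geq 2$ and let $\mathcal{G}$, $\mathcal{H}$ and $\Gamma$ be $r$-uniform supertrees, where $\mathcal{G}$ and $\mathcal{H}$ have the same number of vertices. Let $u\in V(\mathcal{G})$ and $v\in V(\mathcal{H})$. If $\varphi(\mathcal{G},x)=\varphi(\mathcal{H},x)$ and $\varphi(\mathcal{G}-u,x)=\varphi(\mathcal{H}-v,x)$, then for every $w\in V(\Gamma)$ we have $\varphi(\mathcal{G}(u,w)\Gamma,x)=\varphi(\mathcal{H}(v,w)\Gamma,x)$.
   Context: An $r$-uniform hypergraph has every edge consisting of exactly $r$ vertices; an $r$-uniform supertree is a connected acyclic $r$-uniform hypergraph (for $r=2$, an ordinary tree). For an $r$-uniform hypergraph $\mathcal{H}$ on $n$ vertices, $m(\mathcal{H},k)$ denotes the number of $k$-matchings (sets of $k$ pairwise disjoint edges), with $m(\mathcal{H},0)=1$, and the matching polynomial is $\varphi(\mathcal{H},x)=\sum_{k\geq 0}(-1)^k m(\mathcal{H},k)x^{n-kr}$. For a vertex $u$, $\mathcal{H}-u$ is obtained by deleting $u$ and all edges containing $u$ (the other vertices of those edges remain). For disjoint hypergraphs $\mathcal{G},\Gamma$ with $u\in V(\mathcal{G})$, $w\in V(\Gamma)$, $\mathcal{G}(u,w)\Gamma$ denotes the hypergraph obtained from $\mathcal{G}\cup\Gamma$ by identifying $u$ with $w$. *)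

theory Defs
  imports "HOL-Computational_Algebra.Polynomial"
begin

type_synonym 'a hypergraph = "'a set \<times> 'a set set"

definition verts :: "'a hypergraph \<Rightarrow> 'a set" where "verts H = fst H"
definition hedges :: "'a hypergraph \<Rightarrow> 'a set set" where "hedges H = snd H"

definition uniform_hg :: "nat \<Rightarrow> 'a hypergraph \<Rightarrow> bool" where
  "uniform_hg r H \<longleftrightarrow> finite (verts H) \<and>
     (\<forall>e\<in>hedges H. e \<subseteq> verts H \<and> card e = r)"

definition hg_connected :: "'a hypergraph \<Rightarrow> bool" where
  "hg_connected H \<longleftrightarrow> (\<forall>x\<in>verts H. \<forall>y\<in>verts H.
     (x, y) \<in> {(a, b). \<exists>e\<in>hedges H. a \<in> e \<and> b \<in> e}\<^sup>*)"

definition has_berge_cycle :: "'a hypergraph \<Rightarrow> bool" where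
  "has_berge_cycle H \<longleftrightarrow> (\<exists>vs es. length vs = length es \<and> length vs \<ge> 2 \<and>
     distinct vs \<and> distinct es \<and> set es \<subseteq> hedges H \<and>
     (\<forall>i < length vs. vs ! i \<in> es ! i \<and> vs ! ((i + 1) mod length vs) \<in> es ! i))"

definition supertree :: "nat \<Rightarrow> 'a hypergraph \<Rightarrow> bool" where
  "supertree r H \<longleftrightarrow> uniform_hg r H \<and> hg_connected H \<and> \<not> has_berge_cycle H"

definition num_matchings :: "'a hypergraph \<Rightarrow> nat \<Rightarrow> nat" where
  "num_matchings H k = card {M. M \<subseteq> hedges H \<and> card M = k \<and>
       (\<forall>e\<in>M. \<forall>f\<in>M. e \<noteq> f \<longrightarrow> e \<inter> f = {})}"

definition matching_poly :: "nat \<Rightarrow> 'a hypergraph \<Rightarrow> int poly" where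
  "matching_poly r H = (\<Sum>k\<le>card (verts H).
      monom ((-1) ^ k * int (num_matchings H k)) (card (verts H) - k * r))"

definition del_vertex :: "'a hypergraph \<Rightarrow> 'a \<Rightarrow> 'a hypergraph" where
  "del_vertex H u = (verts H - {u}, {e\<in>hedges H. u \<notin> e})"

text \<open>G(u,w)Gamma: disjoint union (via the sum type) identifying u with w.\<close>
definition coalesce :: "'a hypergraph \<Rightarrow> 'a \<Rightarrow> 'b hypergraph \<Rightarrow> 'b \<Rightarrow> ('a + 'b) hypergraph" where
  "coalesce G u \<Gamma> w =
     (let g = (\<lambda>x. if x = w then Inl u else Inr x) in
      (Inl ` verts G \<union> g ` verts \<Gamma>,
       ((`) Inl) ` hedges G \<union> ((`) g) ` hedges \<Gamma>))"

end

theory Submission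
  imports Defs
begin

definition mats :: "'a hypergraph \<Rightarrow> 'a set set set" where
  "mats H = {M. M \<subseteq> hedges H \<and> (\<forall>e\<in>M. \<forall>f\<in>M. e \<noteq> f \<longrightarrow> e \<inter> f = {})}"

lemma nm_mats: "num_matchings H k = card {M \<in> mats H. card M = k}"
  unfolding num_matchings_def mats_def by (rule arg_cong[where f=card]) auto

lemma finite_hedges: "uniform_hg r H \<Longrightarrow> finite (hedges H)"
  unfolding uniform_hg_def
  by (meson Pow_iff finite_Pow_iff finite_subset subsetI)

lemma finite_mats: "uniform_hg r H \<Longrightarrow> finite (mats H)"
  using finite_hedges[of r H] unfolding mats_def
  by (auto intro: finite_subset[of _ "Pow (hedges H)"])

lemma mats_finite_elem: "uniform_hg r H \<Longrightarrow> M \<in> mats H \<Longrightarrow> finite M"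
  using finite_hedges[of r H] unfolding mats_def by (auto intro: finite_subset)

lemma mats_card_bound:
  assumes "uniform_hg r H" "M \<in> mats H"
  shows "card M * r \<le> card (verts H)"
proof -
  have sub: "M \<subseteq> hedges H" and dj: "\<forall>e\<in>M. \<forall>f\<in>M. e \<noteq> f \<longrightarrow> e \<inter> f = {}"
    using assms(2) unfolding mats_def by auto
  have fv: "finite (verts H)" using assms(1) unfolding uniform_hg_def by auto
  have ce: "\<And>e. e \<in> M \<Longrightarrow> card e = r \<and> e \<subseteq> verts H"
    using assms(1) sub unfolding uniform_hg_def by auto
  have "card (\<Union>M) = sum card M"
    apply (rule card_Union_disjoint)
     apply (use dj in \<open>auto simp: pairwise_def disjnt_def\<close>)[1]
    using ce fv by (meson rev_finite_subset)
  also have "\<dots> = card M * r" using ce by simp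
  finally have "card (\<Union>M) = card M * r" .
  moreover have "card (\<Union>M) \<le> card (verts H)"
    using ce fv by (intro card_mono) auto
  ultimately show ?thesis by simp
qed

lemma nm_zero:
  assumes "uniform_hg r H" "card (verts H) < k * r"
  shows "num_matchings H k = 0"
proof -
  have "{M \<in> mats H. card M = k} = {}"
    using mats_card_bound[OF assms(1)] assms(2) by fastforce
  then show ?thesis by (simp only: nm_mats card.empty)
qed

lemma coeff_mp:
  assumes "uniform_hg r H" "r \<ge> 1" "k * r \<le> card (verts H)"
  shows "coeff (matching_poly r H) (card (verts H) - k * r) = (-1)^k * int (num_matchings H k)"
proof -
  let ?n = "card (verts H)"
  have "coeff (matching_poly r H) (?n - k * r) =
     (\<Sum>k'\<le>?n. (if ?n - k' * r = ?n - k * r then (-1)^k' * int (num_matchings H k') else 0))"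
    unfolding matching_poly_def coeff_sum coeff_monom by simp
  also have "\<dots> = (\<Sum>k'\<le>?n. (if k' = k then (-1)^k' * int (num_matchings H k') else 0))"
  proof (rule sum.cong[OF refl])
    fix k' assume "k' \<in> {..?n}"
    show "(if ?n - k' * r = ?n - k * r then (-1)^k' * int (num_matchings H k') else 0) =
          (if k' = k then (-1)^k' * int (num_matchings H k') else 0)"
    proof (cases "k' * r \<le> ?n")
      case True
      then have e1: "(?n - k' * r = ?n - k * r) = (k' * r = k * r)" using assms(2,3) by linarith
      have "(k' * r = k * r) = (k' = k)" using assms(2) by simp
      with e1 show ?thesis by simp
    next
      case False
      then have "num_matchings H k' = 0" using nm_zero[OF assms(1)] by simp
      then show ?thesis by simp
    qed
  qed
  also have "\<dots> = (-1)^k * int (num_matchings H k)"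
  proof -
    have "k \<le> ?n" using assms(2,3) by (metis le_trans mult_le_mono2 mult_1_right mult.commute)
    then show ?thesis by (simp add: sum.delta)
  qed
  finally show ?thesis .
qed

lemma nm_eq:
  assumes "uniform_hg r G" "uniform_hg r H" "r \<ge> 1" "card (verts G) = card (verts H)"
    "matching_poly r G = matching_poly r H"
  shows "num_matchings G k = num_matchings H k"
proof (cases "k * r \<le> card (verts G)")
  case True
  have "(-1::int)^k * int (num_matchings G k) = (-1)^k * int (num_matchings H k)"
    using coeff_mp[OF assms(1,3) True] coeff_mp[OF assms(2,3)] True assms(4,5) by metis
  then show ?thesis by simp
next
  case False
  then show ?thesis using nm_zero[OF assms(1)] nm_zero[OF assms(2)] assms(4) by simp
qed

lemma uniform_del: "uniform_hg r H \<Longrightarrow> uniform_hg r (del_vertex H u)"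
  unfolding uniform_hg_def del_vertex_def verts_def hedges_def by auto

lemma mats_del: "mats (del_vertex H u) = {M \<in> mats H. u \<notin> \<Union>M}"
  unfolding mats_def del_vertex_def hedges_def by auto

lemma card_B: "card {M \<in> mats H. card M = i \<and> u \<notin> \<Union>M} = num_matchings (del_vertex H u) i"
  unfolding nm_mats mats_del by (rule arg_cong[where f=card]) auto

lemma card_A:
  assumes "uniform_hg r H"
  shows "card {M \<in> mats H. card M = i \<and> u \<in> \<Union>M} = num_matchings H i - num_matchings (del_vertex H u) i"
proof -
  have "{M \<in> mats H. card M = i \<and> u \<in> \<Union>M} = {M \<in> mats H. card M = i} - {M \<in> mats H. card M = i \<and> u \<notin> \<Union>M}"
    by auto
  moreover have "card (\<dots>) = card {M \<in> mats H. card M = i} - card {M \<in> mats H. card M = i \<and> u \<notin> \<Union>M}"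
    by (rule card_Diff_subset) (use finite_mats[OF assms] in auto)
  ultimately show ?thesis using card_B[of H i u] nm_mats[of H i] by simp
qed

lemma split_un: "A \<subseteq> {E. E \<subseteq> S} \<Longrightarrow> (\<forall>E\<in>B. \<not> E \<subseteq> S) \<Longrightarrow> A = {E \<in> A \<union> B. E \<subseteq> S}"
  by auto

lemma un_cancel: "A1 \<union> B1 = A2 \<union> B2 \<Longrightarrow> A1 = A2 \<Longrightarrow> A1 \<inter> B1 = {} \<Longrightarrow> A2 \<inter> B2 = {} \<Longrightarrow> B1 = B2"
  by blast

lemma coalesce_count:
  fixes G :: "'a hypergraph" and \<Gamma> :: "'b hypergraph"
  assumes uG: "uniform_hg r G" and uT: "uniform_hg r \<Gamma>" and r2: "r \<ge> 2"
  shows "num_matchings (coalesce G u \<Gamma> w) k =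
    (\<Sum>i\<le>k. num_matchings (del_vertex G u) i * num_matchings \<Gamma> (k - i)
            + (num_matchings G i - num_matchings (del_vertex G u) i) * num_matchings (del_vertex \<Gamma> w) (k - i))"
proof -
  define g where "g = (\<lambda>x. if x = w then (Inl u :: 'a + 'b) else Inr x)"
  define C where "C = coalesce G u \<Gamma> w"
  have hC: "hedges C = (`) Inl ` hedges G \<union> (`) g ` hedges \<Gamma>"
    unfolding C_def coalesce_def g_def hedges_def by (simp add: Let_def)
  have ginj: "inj g" unfolding g_def inj_def by auto
  have notInl: "\<not> g ` f \<subseteq> range Inl" if "f \<in> hedges \<Gamma>" for f
  proof -
    have "card f = r" using uT that unfolding uniform_hg_def by auto
    have "\<not> f \<subseteq> {w}"
    proof
      assume "f \<subseteq> {w}"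
      then have "card f \<le> card {w}" by (intro card_mono) auto
      then show False using \<open>card f = r\<close> r2 by simp
    qed
    then obtain x where "x \<in> f" "x \<noteq> w" by auto
    then show ?thesis unfolding g_def by force
  qed
  define \<Phi> where "\<Phi> = (\<lambda>(M1, M2). (`) Inl ` M1 \<union> (`) g ` M2 :: ('a + 'b) set set)"
  define Q where "Q = {(M1, M2). M1 \<in> mats G \<and> M2 \<in> mats \<Gamma> \<and> \<not> (u \<in> \<Union>M1 \<and> w \<in> \<Union>M2)}"
  have dj: "(`) Inl ` M1 \<inter> (`) g ` M2 = {}" if "M2 \<subseteq> hedges \<Gamma>" for M1 :: "'a set set" and M2
  proof -
    { fix E assume E: "E \<in> (`) Inl ` M1" "E \<in> (`) g ` M2"
      then obtain e f where ef: "E = Inl ` e" "E = g ` f" "f \<in> M2" by blast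
      then have "g ` f \<subseteq> range Inl" by auto
      with notInl that ef(3) have False by blast }
    then show ?thesis by blast
  qed
  have injIl: "inj ((`) (Inl :: 'a \<Rightarrow> 'a + 'b))" by (meson inj_Inl inj_image_eq_iff injI)
  have injg: "inj ((`) g)" by (meson ginj inj_image_eq_iff injI)
  have cardPhi: "card (\<Phi> p) = card (fst p) + card (snd p)" if "p \<in> Q" for p
  proof -
    obtain M1 M2 where p: "p = (M1, M2)" by force
    have m: "M1 \<in> mats G" "M2 \<in> mats \<Gamma>" using that p Q_def by auto
    have f: "finite M1" "finite M2" using mats_finite_elem uG uT m by blast+
    have "card (\<Phi> p) = card ((`) (Inl :: 'a \<Rightarrow> 'a + 'b) ` M1) + card ((`) g ` M2)"
    proof -
      have "M2 \<subseteq> hedges \<Gamma>" using m(2) unfolding mats_def by simp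
      then have "(`) Inl ` M1 \<inter> (`) g ` M2 = {}" by (rule dj)
      then show ?thesis unfolding p \<Phi>_def using f by (simp add: card_Un_disjoint)
    qed
    also have "card ((`) (Inl :: 'a \<Rightarrow> 'a + 'b) ` M1) + card ((`) g ` M2) = card M1 + card M2"
    proof -
      have "card ((`) (Inl :: 'a \<Rightarrow> 'a + 'b) ` M1) = card M1" by (rule card_image[OF inj_on_subset[OF injIl subset_UNIV]])
      moreover have "card ((`) g ` M2) = card M2" by (rule card_image[OF inj_on_subset[OF injg subset_UNIV]])
      ultimately show ?thesis by simp
    qed
    finally show ?thesis using p by simp
  qed
  have injPhi: "inj_on \<Phi> Q"
  proof (rule inj_onI)
    fix p q assume pq: "p \<in> Q" "q \<in> Q" "\<Phi> p = \<Phi> q"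
    obtain M1 M2 N1 N2 where p: "p = (M1, M2)" and q: "q = (N1, N2)" by force
    have s: "M2 \<subseteq> hedges \<Gamma>" "N2 \<subseteq> hedges \<Gamma>" using pq p q unfolding Q_def mats_def by auto
    have e: "(`) Inl ` M1 \<union> (`) g ` M2 = (`) Inl ` N1 \<union> (`) g ` N2" using pq p q \<Phi>_def by simp
    have il: "(`) (Inl :: 'a \<Rightarrow> 'a + 'b) ` X \<subseteq> {E. E \<subseteq> range Inl}" for X by auto
    have gl: "\<forall>E\<in>(`) g ` Y. \<not> E \<subseteq> range Inl" if "Y \<subseteq> hedges \<Gamma>" for Y
      using notInl that by auto
    have r1: "(`) Inl ` M1 = {E \<in> (`) Inl ` M1 \<union> (`) g ` M2. E \<subseteq> range Inl}"
      by (rule split_un[OF il gl[OF s(1)]])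
    have r2': "(`) Inl ` N1 = {E \<in> (`) Inl ` N1 \<union> (`) g ` N2. E \<subseteq> range Inl}"
      by (rule split_un[OF il gl[OF s(2)]])
    have a1: "(`) (Inl :: 'a \<Rightarrow> 'a + 'b) ` M1 = (`) Inl ` N1"
      by (rule trans[OF r1 trans[OF _ r2'[symmetric]]]) (simp only: e)
    have "(`) g ` M2 = (`) g ` N2" by (rule un_cancel[OF e a1 dj[OF s(1)] dj[OF s(2)]])
    then have "M2 = N2" by (simp only: inj_image_eq_iff[OF injg])
    moreover have "M1 = N1" using a1 by (simp only: inj_image_eq_iff[OF injIl])
    ultimately show "p = q" using p q by simp
  qed
  have imPhi: "\<Phi> ` Q = mats C"
  proof
    show "\<Phi> ` Q \<subseteq> mats C"
    proof
      fix M assume "M \<in> \<Phi> ` Q"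
      then obtain M1 M2 where M: "M = (`) Inl ` M1 \<union> (`) g ` M2" and q: "(M1, M2) \<in> Q"
        unfolding \<Phi>_def by auto
      have m1: "M1 \<subseteq> hedges G" "\<forall>e\<in>M1. \<forall>f\<in>M1. e \<noteq> f \<longrightarrow> e \<inter> f = {}"
        and m2: "M2 \<subseteq> hedges \<Gamma>" "\<forall>e\<in>M2. \<forall>f\<in>M2. e \<noteq> f \<longrightarrow> e \<inter> f = {}"
        and nb: "\<not> (u \<in> \<Union>M1 \<and> w \<in> \<Union>M2)"
        using q unfolding Q_def mats_def by auto
      have "M \<subseteq> hedges C" using M m1 m2 hC by auto
      moreover have "\<forall>E\<in>M. \<forall>F\<in>M. E \<noteq> F \<longrightarrow> E \<inter> F = {}"
      proof (intro ballI impI)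
        fix E F assume EF: "E \<in> M" "F \<in> M" "E \<noteq> F"
        have c1: "(Inl :: 'a \<Rightarrow> 'a + 'b) ` e \<inter> Inl ` f = {}" if "e \<in> M1" "f \<in> M1" "Inl ` e \<noteq> Inl ` f" for e f
          using m1(2) that by blast
        have c2: "g ` e \<inter> g ` f = {}" if "e \<in> M2" "f \<in> M2" "g ` e \<noteq> g ` f" for e f
        proof -
          have "e \<noteq> f" using that by auto
          then have "e \<inter> f = {}" using m2(2) that by auto
          then show ?thesis using ginj by (simp add: image_Int[symmetric])
        qed
        have c3: "(Inl :: 'a \<Rightarrow> 'a + 'b) ` e \<inter> g ` f = {}" if "e \<in> M1" "f \<in> M2" for e f
        proof (rule ccontr)
          assume "(Inl :: 'a \<Rightarrow> 'a + 'b) ` e \<inter> g ` f \<noteq> {}"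
          then obtain x y where "x \<in> e" "y \<in> f" "Inl x = g y" by auto
          then have "y = w" "x = u" unfolding g_def by (auto split: if_splits)
          then show False using nb that \<open>x \<in> e\<close> \<open>y \<in> f\<close> by auto
        qed
        have cs: "\<And>X. X \<in> M \<Longrightarrow> (\<exists>e\<in>M1. X = Inl ` e) \<or> (\<exists>e\<in>M2. X = g ` e)" using M by auto
        from cs[OF EF(1)] cs[OF EF(2)] show "E \<inter> F = {}"
        proof (elim disjE bexE)
          fix e f assume "e \<in> M1" "E = Inl ` e" "f \<in> M1" "F = Inl ` f"
          then show ?thesis using c1 EF(3) by blast
        next
          fix e f assume "e \<in> M1" "E = Inl ` e" "f \<in> M2" "F = g ` f"
          then show ?thesis using c3 by blast
        next
          fix e f assume "e \<in> M2" "E = g ` e" "f \<in> M1" "F = Inl ` f"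
          then show ?thesis using c3[of f e] by blast
        next
          fix e f assume "e \<in> M2" "E = g ` e" "f \<in> M2" "F = g ` f"
          then show ?thesis using c2 EF(3) by blast
        qed
      qed
      ultimately show "M \<in> mats C" unfolding mats_def by auto
    qed
  next
    show "mats C \<subseteq> \<Phi> ` Q"
    proof
      fix M assume M: "M \<in> mats C"
      define M1 where "M1 = {e \<in> hedges G. Inl ` e \<in> M}"
      define M2 where "M2 = {e \<in> hedges \<Gamma>. g ` e \<in> M}"
      have sub: "M \<subseteq> hedges C" and pd: "\<forall>E\<in>M. \<forall>F\<in>M. E \<noteq> F \<longrightarrow> E \<inter> F = {}"
        using M unfolding mats_def by auto
      have eq: "M = \<Phi> (M1, M2)" using sub hC unfolding \<Phi>_def M1_def M2_def by auto
      have "M1 \<in> mats G"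
        unfolding mats_def M1_def
      proof (intro CollectI conjI ballI impI)
        fix e f assume a: "e \<in> {e \<in> hedges G. Inl ` e \<in> M}" "f \<in> {e \<in> hedges G. Inl ` e \<in> M}" "e \<noteq> f"
        then have "Inl ` e \<noteq> Inl ` f" using inj_Inl by (simp add: inj_image_eq_iff)
        then have "Inl ` e \<inter> Inl ` f = {}" using pd a by blast
        then show "e \<inter> f = {}" by auto
      qed auto
      moreover have "M2 \<in> mats \<Gamma>"
        unfolding mats_def M2_def
      proof (intro CollectI conjI ballI impI)
        fix e f assume a: "e \<in> {e \<in> hedges \<Gamma>. g ` e \<in> M}" "f \<in> {e \<in> hedges \<Gamma>. g ` e \<in> M}" "e \<noteq> f"
        then have "g ` e \<noteq> g ` f" using ginj by (simp add: inj_image_eq_iff)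
        then have "g ` e \<inter> g ` f = {}" using pd a by blast
        then show "e \<inter> f = {}" by auto
      qed auto
      moreover have "\<not> (u \<in> \<Union>M1 \<and> w \<in> \<Union>M2)"
      proof
        assume "u \<in> \<Union>M1 \<and> w \<in> \<Union>M2"
        then obtain e f where ef: "e \<in> M1" "f \<in> M2" "u \<in> e" "w \<in> f" by auto
        have "Inl ` e \<noteq> g ` f" using notInl[of f] ef M2_def by auto
        moreover have "Inl u \<in> Inl ` e \<inter> g ` f" using ef unfolding g_def by force
        ultimately show False using pd ef M1_def M2_def by blast
      qed
      ultimately show "M \<in> \<Phi> ` Q" using eq unfolding Q_def by auto
    qed
  qed
  define T where "T = (\<lambda>j. {M \<in> mats \<Gamma>. card M = j})"
  define U where "U = (\<lambda>j. {M \<in> mats \<Gamma>. card M = j \<and> w \<notin> \<Union>M})"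
  define B where "B = (\<lambda>i. {M \<in> mats G. card M = i \<and> u \<notin> \<Union>M})"
  define A where "A = (\<lambda>i. {M \<in> mats G. card M = i \<and> u \<in> \<Union>M})"
  define S where "S = (\<lambda>i. B i \<times> T (k - i) \<union> A i \<times> U (k - i))"
  have Qk: "{p \<in> Q. card (fst p) + card (snd p) = k} = (\<Union>i\<in>{..k}. S i)"
  proof
    show "{p \<in> Q. card (fst p) + card (snd p) = k} \<subseteq> (\<Union>i\<in>{..k}. S i)"
    proof
      fix p assume "p \<in> {p \<in> Q. card (fst p) + card (snd p) = k}"
      then obtain M1 M2 where p: "p = (M1, M2)" "M1 \<in> mats G" "M2 \<in> mats \<Gamma>"
        "\<not> (u \<in> \<Union>M1 \<and> w \<in> \<Union>M2)" "card M1 + card M2 = k" unfolding Q_def by auto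
      then have "p \<in> S (card M1)" unfolding S_def A_def B_def T_def U_def by auto
      moreover have "card M1 \<in> {..k}" using p by auto
      ultimately show "p \<in> (\<Union>i\<in>{..k}. S i)" by blast
    qed
    show "(\<Union>i\<in>{..k}. S i) \<subseteq> {p \<in> Q. card (fst p) + card (snd p) = k}"
      unfolding Q_def S_def A_def B_def T_def U_def by auto
  qed
  have "{M \<in> mats C. card M = k} = \<Phi> ` {p \<in> Q. card (fst p) + card (snd p) = k}"
  proof
    show "{M \<in> mats C. card M = k} \<subseteq> \<Phi> ` {p \<in> Q. card (fst p) + card (snd p) = k}"
    proof
      fix M assume M: "M \<in> {M \<in> mats C. card M = k}"
      then obtain p where p: "p \<in> Q" "M = \<Phi> p" using imPhi by (metis (no_types, lifting) imageE mem_Collect_eq)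
      then have "card (fst p) + card (snd p) = k" using cardPhi M by auto
      then show "M \<in> \<Phi> ` {p \<in> Q. card (fst p) + card (snd p) = k}" using p by blast
    qed
    show "\<Phi> ` {p \<in> Q. card (fst p) + card (snd p) = k} \<subseteq> {M \<in> mats C. card M = k}"
      using imPhi cardPhi by auto
  qed
  then have "card {M \<in> mats C. card M = k} = card {p \<in> Q. card (fst p) + card (snd p) = k}"
    using card_image[OF inj_on_subset[OF injPhi]] by (metis (no_types, lifting) mem_Collect_eq subsetI)
  also have "\<dots> = (\<Sum>i\<le>k. card (S i))"
    unfolding Qk
  proof (rule card_UN_disjoint)
    show "\<forall>i\<in>{..k}. finite (S i)" unfolding S_def A_def B_def T_def U_def
      using finite_mats[OF uG] finite_mats[OF uT] by auto
    show "\<forall>i\<in>{..k}. \<forall>j\<in>{..k}. i \<noteq> j \<longrightarrow> S i \<inter> S j = {}"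
      unfolding S_def A_def B_def T_def U_def by auto
  qed simp
  also have "\<dots> = (\<Sum>i\<le>k. card (B i) * card (T (k - i)) + card (A i) * card (U (k - i)))"
  proof (rule sum.cong[OF refl])
    fix i
    have "card (S i) = card (B i \<times> T (k - i)) + card (A i \<times> U (k - i))"
      unfolding S_def
      by (rule card_Un_disjoint) (use finite_mats[OF uG] finite_mats[OF uT] in \<open>auto simp: A_def B_def T_def U_def\<close>)
    then show "card (S i) = card (B i) * card (T (k - i)) + card (A i) * card (U (k - i))"
      by (simp add: card_cartesian_product)
  qed
  finally show ?thesis
    unfolding C_def[symmetric] nm_mats[of C k] A_def B_def T_def U_def card_A[OF uG] card_B
      nm_mats[of \<Gamma>, symmetric] .
qed


lemma card_coalesce:
  fixes G :: "'a hypergraph" and \<Gamma> :: "'b hypergraph"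
  assumes "finite (verts G)" "finite (verts \<Gamma>)" "u \<in> verts G" "w \<in> verts \<Gamma>"
  shows "card (verts (coalesce G u \<Gamma> w)) = card (verts G) + (card (verts \<Gamma>) - 1)"
proof -
  have "verts (coalesce G u \<Gamma> w) = Inl ` verts G \<union> Inr ` (verts \<Gamma> - {w})"
    using assms(3,4) unfolding coalesce_def verts_def by (auto simp: Let_def)
  moreover have "card (Inl ` verts G \<union> (Inr :: 'b \<Rightarrow> 'a + 'b) ` (verts \<Gamma> - {w})) = card (verts G) + card (verts \<Gamma> - {w})"
    using assms(1,2) by (subst card_Un_disjoint) (auto simp: card_image)
  ultimately show ?thesis using assms by simp
qed

lemma card_del: "finite (verts H) \<Longrightarrow> u \<in> verts H \<Longrightarrow> card (verts (del_vertex H u)) = card (verts H) - 1"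
  unfolding del_vertex_def verts_def by simp

theorem lemma8:
  fixes r :: nat and G :: "'a hypergraph" and H :: "'c hypergraph" and \<Gamma> :: "'b hypergraph"
    and u :: 'a and v :: 'c and w :: 'b
  assumes "r \<ge> 2"
    and "supertree r G" and "supertree r H" and "supertree r \<Gamma>"
    and "card (verts G) = card (verts H)"
    and "u \<in> verts G" and "v \<in> verts H"
    and "matching_poly r G = matching_poly r H"
    and "matching_poly r (del_vertex G u) = matching_poly r (del_vertex H v)"
    and "w \<in> verts \<Gamma>"
  shows "matching_poly r (coalesce G u \<Gamma> w) = matching_poly r (coalesce H v \<Gamma> w)"
proof -
  have uG: "uniform_hg r G" and uH: "uniform_hg r H" and uT: "uniform_hg r \<Gamma>"
    using assms(2,3,4) unfolding supertree_def by auto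
  have r1: "r \<ge> 1" using assms(1) by simp
  have fG: "finite (verts G)" and fH: "finite (verts H)" and fT: "finite (verts \<Gamma>)"
    using uG uH uT unfolding uniform_hg_def by auto
  have e1: "num_matchings G k = num_matchings H k" for k
    by (rule nm_eq[OF uG uH r1 assms(5,8)])
  have e2: "num_matchings (del_vertex G u) k = num_matchings (del_vertex H v) k" for k
    by (rule nm_eq[OF uniform_del[OF uG] uniform_del[OF uH] r1 _ assms(9)])
       (simp add: card_del fG fH assms(5,6,7))
  have cv: "card (verts (coalesce G u \<Gamma> w)) = card (verts (coalesce H v \<Gamma> w))"
    using card_coalesce[OF fG fT assms(6,10)] card_coalesce[OF fH fT assms(7,10)] assms(5) by simp
  have e3: "num_matchings (coalesce G u \<Gamma> w) k = num_matchings (coalesce H v \<Gamma> w) k" for k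
    unfolding coalesce_count[OF uG uT assms(1)] coalesce_count[OF uH uT assms(1)] e1 e2 ..
  show ?thesis unfolding matching_poly_def cv e3 ..
qed

end
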